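(* Let $n\ge1$, $r\ge0$ an integer, and $g,h$ formal power series in one variable. Then $$\int\mathcal{D}_n(\psi,\bar\psi)\,(\bar\psi,\psi)^r\,\exp\!\Big[h\big((\bar\psi,\psi)\big)+(\bar\psi,J\psi)\,g\big((\bar\psi,\psi)\big)\Big]=\int\mathcal{D}_n(\psi,\bar\psi)\,(\bar\psi,\psi)^r\,e^{h((\bar\psi,\psi))}\Big[1+(\bar\psi,\psi)\,g\big((\bar\psi,\psi)\big)\Big].$$
   Context: Grassmann algebra over $\mathbb{C}$ generated by anticommuting $\psi_1,\dots,\psi_n,\bar\psi_1,\dots,\bar\psi_n$; $\int\mathcal{D}_n(\psi,\bar\psi)$ is the Berezin integral returning the coefficient of $\prod_{i=1}^n(\bar\psi_i\psi_i)$ (convention $\int d\bar\psi_i d\psi_i\,\bar\psi_i\psi_i=1$). $(\bar\psi,\psi):=\sum_{i=1}^n\bar\psi_i\psi_i$ and $(\bar\psi,J\psi):=\sum_{i,j=1}^n\bar\psi_i\psi_j$, where $J$ is the $n\times n$ all-ones matrix. Functions of the nilpotent even elements are defined by their (terminating) power series. *)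

theory Defs
  imports Complex_Main "HOL-Computational_Algebra.Formal_Power_Series"
begin

text \<open>Grassmann algebra over the complex numbers with generators e_0, e_1, e_2, ...
  (indexed by nat). An element is given by its coefficient function on monomials:
  a finite set S = {s1 < ... < sk} of generator indices stands for the ordered
  monomial e_s1 e_s2 ... e_sk.\<close>

type_synonym grass = "nat set \<Rightarrow> complex"

definition gzero :: grass where "gzero = (\<lambda>S. 0)"
definition gone :: grass where "gone = (\<lambda>S. if S = {} then 1 else 0)"
definition gen :: "nat \<Rightarrow> grass" where "gen i = (\<lambda>S. if S = {i} then 1 else 0)"
definition gadd :: "grass \<Rightarrow> grass \<Rightarrow> grass" where "gadd x y = (\<lambda>S. x S + y S)"
definition gscale :: "complex \<Rightarrow> grass \<Rightarrow> grass" where "gscale c x = (\<lambda>S. c * x S)"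

text \<open>Sign of reordering e_A e_B (A, B disjoint, each ordered) into the ordered monomial e_(A union B).\<close>
definition reorder_sign :: "nat set \<Rightarrow> nat set \<Rightarrow> complex" where
  "reorder_sign A B = (-1) ^ card {(a, b). a \<in> A \<and> b \<in> B \<and> b < a}"

definition gmult :: "grass \<Rightarrow> grass \<Rightarrow> grass" where
  "gmult x y = (\<lambda>S. \<Sum>A\<in>Pow S. reorder_sign A (S - A) * x A * y (S - A))"

primrec gpow :: "grass \<Rightarrow> nat \<Rightarrow> grass" where
  "gpow x 0 = gone"
| "gpow x (Suc k) = gmult x (gpow x k)"

definition gnil :: "grass \<Rightarrow> grass" where "gnil x = (\<lambda>S. if S = {} then 0 else x S)"

text \<open>Application of a formal power series to an element without scalar part: the
  power series terminates; the coefficient of the monomial S only receives contributions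
  from powers k \<le> card S.\<close>
definition fps_app :: "complex fps \<Rightarrow> grass \<Rightarrow> grass" where
  "fps_app f x = (\<lambda>S. \<Sum>k\<le>card S. fps_nth f k * gpow x k S)"

text \<open>Exponential of an even element: exp(c + N) = e^c * sum_k N^k/k!, N nilpotent.\<close>
definition gexp :: "grass \<Rightarrow> grass" where
  "gexp x = (\<lambda>S. exp (x {}) * (\<Sum>k\<le>card S. gpow (gnil x) k S / of_nat (fact k)))"

definition psibar :: "nat \<Rightarrow> grass" where "psibar i = gen (2 * i)"
definition psi :: "nat \<Rightarrow> grass" where "psi i = gen (2 * i + 1)"

definition pairing :: "nat \<Rightarrow> grass" where
  "pairing n = (\<lambda>S. \<Sum>i\<in>{1..n}. gmult (psibar i) (psi i) S)"

definition Jpairing :: "nat \<Rightarrow> grass" where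
  "Jpairing n = (\<lambda>S. \<Sum>i\<in>{1..n}. \<Sum>j\<in>{1..n}. gmult (psibar i) (psi j) S)"

text \<open>Berezin integral: coefficient of prod_{i=1}^n (psibar_i psi_i), which (in our ordering
  psibar_i < psi_i < psibar_(i+1)) is the ordered monomial on {2..2n+1} with sign +1.\<close>
definition berezin :: "nat \<Rightarrow> grass \<Rightarrow> complex" where
  "berezin n x = x {2..2 * n + 1}"

end

theory Submission
  imports Defs
begin


definition ninv :: "nat set \<Rightarrow> nat set \<Rightarrow> nat" where
  "ninv A B = card {(a, b). a \<in> A \<and> b \<in> B \<and> b < a}"

lemma rs_eq: "reorder_sign A B = (-1) ^ ninv A B"
  by (simp add: reorder_sign_def ninv_def)

lemma ninv_fin: "finite A \<Longrightarrow> finite B \<Longrightarrow> finite {(a, b). a \<in> A \<and> b \<in> B \<and> b < a}"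
  by (rule finite_subset[of _ "A \<times> B"]) auto

lemma ninv_Un1:
  assumes "finite A" "finite C" "finite D" "A \<inter> C = {}"
  shows "ninv (A \<union> C) D = ninv A D + ninv C D"
proof -
  have "{(a, b). a \<in> A \<union> C \<and> b \<in> D \<and> b < a} =
        {(a, b). a \<in> A \<and> b \<in> D \<and> b < a} \<union> {(a, b). a \<in> C \<and> b \<in> D \<and> b < a}" by auto
  moreover have "card (\<dots>) = ninv A D + ninv C D"
    unfolding ninv_def
    by (rule card_Un_disjoint) (use assms in \<open>auto intro: ninv_fin\<close>)
  ultimately show ?thesis by (simp add: ninv_def)
qed

lemma ninv_Un2:
  assumes "finite A" "finite C" "finite D" "C \<inter> D = {}"
  shows "ninv A (C \<union> D) = ninv A C + ninv A D"
proof -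
  have "{(a, b). a \<in> A \<and> b \<in> C \<union> D \<and> b < a} =
        {(a, b). a \<in> A \<and> b \<in> C \<and> b < a} \<union> {(a, b). a \<in> A \<and> b \<in> D \<and> b < a}" by auto
  moreover have "card (\<dots>) = ninv A C + ninv A D"
    unfolding ninv_def
    by (rule card_Un_disjoint) (use assms in \<open>auto intro: ninv_fin\<close>)
  ultimately show ?thesis by (simp add: ninv_def)
qed

lemma ninv_swap:
  assumes "finite A" "finite B" "A \<inter> B = {}"
  shows "ninv A B + ninv B A = card A * card B"
proof -
  have e: "{(b, a). b \<in> B \<and> a \<in> A \<and> a < b} = prod.swap ` {(a, b). a \<in> A \<and> b \<in> B \<and> a < b}"
    by (auto simp: image_iff)
  have "ninv B A = card {(a, b). a \<in> A \<and> b \<in> B \<and> a < b}"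
    unfolding ninv_def e by (rule card_image) (simp add: inj_on_def)
  moreover have "A \<times> B = {(a, b). a \<in> A \<and> b \<in> B \<and> b < a} \<union> {(a, b). a \<in> A \<and> b \<in> B \<and> a < b}"
    using assms(3) by auto
  moreover have "card ({(a, b). a \<in> A \<and> b \<in> B \<and> b < a} \<union> {(a, b). a \<in> A \<and> b \<in> B \<and> a < b})
      = ninv A B + card {(a, b). a \<in> A \<and> b \<in> B \<and> a < b}"
    unfolding ninv_def
    by (rule card_Un_disjoint) (use assms in \<open>auto intro: finite_subset[of _ "A \<times> B"]\<close>)
  ultimately show ?thesis by (metis card_cartesian_product)
qed

lemma rs_swap:
  assumes "finite A" "finite B" "A \<inter> B = {}"
  shows "reorder_sign B A = reorder_sign A B * (-1) ^ (card A * card B)"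
proof -
  have "(-1::complex) ^ (card A * card B) = (-1) ^ ninv A B * (-1) ^ ninv B A"
    using ninv_swap[OF assms] by (metis power_add)
  moreover have "(-1::complex) ^ ninv A B * (-1) ^ ninv A B = 1"
    by (simp flip: power_mult_distrib)
  ultimately show ?thesis unfolding rs_eq by (metis mult.assoc mult_1 mult.commute)
qed

lemma rs_assoc:
  assumes "A \<subseteq> B" "B \<subseteq> S" "finite S"
  shows "reorder_sign A (S - A) * reorder_sign (B - A) (S - B) = reorder_sign B (S - B) * reorder_sign A (B - A)"
proof -
  have fin: "finite A" "finite B" "finite (S - A)" "finite (B - A)" "finite (S - B)"
    using assms by (meson Diff_subset finite_subset subset_trans)+
  have "S - A = (B - A) \<union> (S - B)" using assms by blast
  hence "ninv A (S - A) = ninv A ((B - A) \<union> (S - B))" by simp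
  also have "\<dots> = ninv A (B - A) + ninv A (S - B)"
    by (rule ninv_Un2) (use fin in auto)
  finally have 1: "ninv A (S - A) = ninv A (B - A) + ninv A (S - B)" .
  have "ninv B (S - B) = ninv (A \<union> (B - A)) (S - B)"
    using assms by (simp add: Un_absorb1)
  also have "\<dots> = ninv A (S - B) + ninv (B - A) (S - B)"
    by (rule ninv_Un1) (use fin in auto)
  finally have 2: "ninv B (S - B) = ninv A (S - B) + ninv (B - A) (S - B)" .
  show ?thesis unfolding rs_eq 1 2 power_add by (simp add: mult_ac)
qed

lemma gmult_inf: "infinite S \<Longrightarrow> gmult x y S = 0"
  by (simp add: gmult_def)

lemma gmult_assoc: "gmult (gmult x y) z = gmult x (gmult y z)"
proof (rule ext)
  fix S
  show "gmult (gmult x y) z S = gmult x (gmult y z) S"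
  proof (cases "finite S")
    case False thus ?thesis by (simp add: gmult_inf)
  next
    case True
    have L: "gmult (gmult x y) z S = (\<Sum>(B, A)\<in>Sigma (Pow S) Pow.
        reorder_sign B (S - B) * reorder_sign A (B - A) * x A * y (B - A) * z (S - B))"
      unfolding gmult_def
      by (subst sum.Sigma[symmetric]) (use True finite_subset in \<open>auto simp: sum_distrib_left sum_distrib_right mult_ac intro!: sum.cong\<close>)
    have R: "gmult x (gmult y z) S = (\<Sum>(A, C)\<in>Sigma (Pow S) (\<lambda>A. Pow (S - A)).
        reorder_sign A (S - A) * reorder_sign C (S - A - C) * x A * y C * z (S - A - C))"
      unfolding gmult_def
      by (subst sum.Sigma[symmetric]) (use True finite_subset in \<open>auto simp: sum_distrib_left sum_distrib_right mult_ac intro!: sum.cong\<close>)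
    show ?thesis unfolding L R
    proof (rule sum.reindex_bij_witness[of _ "\<lambda>(A, C). (A \<union> C, A)" "\<lambda>(B, A). (A, B - A)"])
      fix a assume a: "a \<in> Sigma (Pow S) Pow"
      then obtain B A where [simp]: "a = (B, A)" and h: "A \<subseteq> B" "B \<subseteq> S" by auto
      show "(case case a of (B, A) \<Rightarrow> (A, B - A) of (A, C) \<Rightarrow> (A \<union> C, A)) = a" using h by auto
      show "(case a of (B, A) \<Rightarrow> (A, B - A)) \<in> Sigma (Pow S) (\<lambda>A. Pow (S - A))" using h by auto
      have d: "S - A - (B - A) = S - B" using h by auto
      show "(case case a of (B, A) \<Rightarrow> (A, B - A) of
          (A, C) \<Rightarrow> reorder_sign A (S - A) * reorder_sign C (S - A - C) * x A * y C * z (S - A - C)) =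
         (case a of (B, A) \<Rightarrow> reorder_sign B (S - B) * reorder_sign A (B - A) * x A * y (B - A) * z (S - B))"
        using rs_assoc[OF h True] by (simp add: d)
    next
      fix b assume b: "b \<in> Sigma (Pow S) (\<lambda>A. Pow (S - A))"
      then obtain A C where [simp]: "b = (A, C)" and h: "A \<subseteq> S" "C \<subseteq> S - A" by auto
      show "(case case b of (A, C) \<Rightarrow> (A \<union> C, A) of (B, A) \<Rightarrow> (A, B - A)) = b" using h by auto
      show "(case b of (A, C) \<Rightarrow> (A \<union> C, A)) \<in> Sigma (Pow S) Pow" using h by auto
    qed
  qed
qed



lemma ninv_empty [simp]: "ninv A {} = 0" "ninv {} A = 0" by (simp_all add: ninv_def)

lemma gone_inf: "infinite S \<Longrightarrow> gone S = 0" by (auto simp: gone_def)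

lemma gmult_gone_left:
  assumes "\<forall>S. infinite S \<longrightarrow> x S = 0"
  shows "gmult gone x = x"
proof (rule ext)
  fix S show "gmult gone x S = x S"
  proof (cases "finite S")
    case True
    have "gmult gone x S = (\<Sum>A\<in>Pow S. if A = {} then x S else 0)"
      unfolding gmult_def by (rule sum.cong) (auto simp: gone_def rs_eq)
    thus ?thesis using True by simp
  qed (use assms gmult_inf in auto)
qed

lemma gmult_gone_right:
  assumes "\<forall>S. infinite S \<longrightarrow> x S = 0"
  shows "gmult x gone = x"
proof (rule ext)
  fix S show "gmult x gone S = x S"
  proof (cases "finite S")
    case True
    have "gmult x gone S = (\<Sum>A\<in>Pow S. if A = S then x S else 0)"
      unfolding gmult_def by (rule sum.cong) (auto simp: gone_def rs_eq)
    thus ?thesis using True by simp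
  qed (use assms gmult_inf in auto)
qed

lemma gmult_gadd_left: "gmult (gadd x y) z = gadd (gmult x z) (gmult y z)"
  by (auto simp: gmult_def gadd_def algebra_simps sum.distrib intro!: ext)

lemma gmult_gadd_right: "gmult z (gadd x y) = gadd (gmult z x) (gmult z y)"
  by (auto simp: gmult_def gadd_def algebra_simps sum.distrib intro!: ext)

typedef gr = "{x::grass. \<forall>S. infinite S \<longrightarrow> x S = 0}" morphisms Rg Ag
  by (rule exI[of _ gzero]) (simp add: gzero_def)

setup_lifting type_definition_gr

instantiation gr :: ring_1
begin
lift_definition zero_gr :: gr is gzero by (simp add: gzero_def)
lift_definition one_gr :: gr is gone by (auto simp: gone_def)
lift_definition plus_gr :: "gr \<Rightarrow> gr \<Rightarrow> gr" is gadd by (simp add: gadd_def)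
lift_definition uminus_gr :: "gr \<Rightarrow> gr" is "gscale (-1)" by (simp add: gscale_def)
lift_definition minus_gr :: "gr \<Rightarrow> gr \<Rightarrow> gr" is "\<lambda>x y. gadd x (gscale (-1) y)"
  by (simp add: gadd_def gscale_def)
lift_definition times_gr :: "gr \<Rightarrow> gr \<Rightarrow> gr" is gmult by (simp add: gmult_inf)
instance
proof
  fix a b c :: gr
  show "a + b + c = a + (b + c)" by transfer (simp add: gadd_def add.assoc)
  show "a + b = b + a" by transfer (simp add: gadd_def add.commute)
  show "0 + a = a" by transfer (simp add: gadd_def gzero_def)
  show "- a + a = 0" by transfer (simp add: gadd_def gzero_def gscale_def)
  show "a - b = a + - b" by transfer simp
  show "a * b * c = a * (b * c)" by transfer (rule gmult_assoc)
  show "(a + b) * c = a * c + b * c" by transfer (rule gmult_gadd_left)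
  show "a * (b + c) = a * b + a * c" by transfer (rule gmult_gadd_right)
  show "1 * a = a" by transfer (rule gmult_gone_left)
  show "a * 1 = a" by transfer (rule gmult_gone_right)
  show "(0::gr) \<noteq> 1" by transfer (simp add: gzero_def gone_def fun_eq_iff)
qed
end

lemma Rg_sum: "Rg (sum f K) S = (\<Sum>k\<in>K. Rg (f k) S)"
  by (induction K rule: infinite_finite_induct) (auto simp: zero_gr.rep_eq plus_gr.rep_eq gzero_def gadd_def)

lemma Rg_pow: "Rg (x ^ k) = gpow (Rg x) k"
  by (induction k) (auto simp: one_gr.rep_eq times_gr.rep_eq)

lemma Rg_of_nat: "Rg (of_nat k * x) S = of_nat k * Rg x S"
  by (induction k) (auto simp: plus_gr.rep_eq zero_gr.rep_eq gadd_def gzero_def algebra_simps)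

lemma Rg_minus: "Rg (- x) S = - Rg x S"
  by (simp add: uminus_gr.rep_eq gscale_def)

lemma Rg_inf: "infinite S \<Longrightarrow> Rg x S = 0"
  using Rg by auto



definition supp :: "(nat set \<Rightarrow> bool) \<Rightarrow> grass \<Rightarrow> bool" where
  "supp P x \<longleftrightarrow> (\<forall>A. x A \<noteq> 0 \<longrightarrow> P A)"

definition closedP :: "(nat set \<Rightarrow> bool) \<Rightarrow> bool" where
  "closedP P \<longleftrightarrow> P {} \<and> (\<forall>A B. finite A \<longrightarrow> finite B \<longrightarrow> A \<inter> B = {} \<longrightarrow> P A \<longrightarrow> P B \<longrightarrow> P (A \<union> B))"

lemma supp_gmult:
  assumes c: "closedP P" and x: "supp P x" and y: "supp P y"
  shows "supp P (gmult x y)"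
  unfolding supp_def
proof (intro allI impI)
  fix S assume ne: "gmult x y S \<noteq> 0"
  hence fin: "finite S" using gmult_inf by blast
  from ne obtain A where A: "A \<in> Pow S" "reorder_sign A (S - A) * x A * y (S - A) \<noteq> 0"
    unfolding gmult_def by (meson sum.not_neutral_contains_not_neutral)
  hence "P A" "P (S - A)" using x y by (auto simp: supp_def)
  moreover have "finite A" "finite (S - A)" using A fin finite_subset by auto
  ultimately have "P (A \<union> (S - A))" using c unfolding closedP_def by blast
  moreover have "A \<union> (S - A) = S" using A by auto
  ultimately show "P S" by simp
qed

lemma supp_gone: "closedP P \<Longrightarrow> supp P gone"
  by (auto simp: supp_def gone_def closedP_def)

lemma supp_gpow: "closedP P \<Longrightarrow> supp P x \<Longrightarrow> supp P (gpow x k)"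
  by (induction k) (auto intro: supp_gmult supp_gone)

lemma supp_gadd: "supp P x \<Longrightarrow> supp P y \<Longrightarrow> supp P (gadd x y)"
  unfolding supp_def gadd_def by (metis add_0)

lemma supp_sumfun:
  assumes "\<And>S. \<forall>k\<in>K S. f k S \<noteq> 0 \<longrightarrow> P S"
  shows "supp P (\<lambda>S. \<Sum>k\<in>K S. f k S)"
  unfolding supp_def using assms by (metis sum.neutral)

lemma supp_fps_app: assumes "closedP P" "supp P x" shows "supp P (fps_app f x)"
  unfolding fps_app_def
  by (rule supp_sumfun) (use supp_gpow[OF assms] in \<open>auto simp: supp_def\<close>)

lemma supp_gnil: "supp P x \<Longrightarrow> supp P (gnil x)"
  by (auto simp: supp_def gnil_def)

lemma supp_gexp: "closedP P \<Longrightarrow> supp P x \<Longrightarrow> supp P (gexp x)"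
proof -
  assume c: "closedP P" and x: "supp P x"
  have "supp P (\<lambda>S. \<Sum>k\<le>card S. gpow (gnil x) k S / of_nat (fact k))"
    by (rule supp_sumfun) (use supp_gpow[OF c supp_gnil[OF x]] in \<open>auto simp: supp_def\<close>)
  thus ?thesis unfolding gexp_def supp_def by auto
qed

abbreviation ev :: "nat set \<Rightarrow> bool" where "ev A \<equiv> even (card A)"

lemma closed_ev: "closedP ev"
  by (auto simp: closedP_def card_Un_disjoint)

lemma gmult_swap:
  assumes "finite S"
  shows "gmult y x S = (\<Sum>A\<in>Pow S. reorder_sign A (S - A) * (-1) ^ (card A * card (S - A)) * x A * y (S - A))"
  unfolding gmult_def
proof (rule sum.reindex_bij_witness[of _ "\<lambda>A. S - A" "\<lambda>A. S - A"])
  fix A assume "A \<in> Pow S"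
  hence A: "A \<subseteq> S" by auto
  show "S - (S - A) = A" "S - A \<in> Pow S" using A by auto
  have "finite A" "finite (S - A)" using A assms finite_subset by auto
  from rs_swap[OF this(2,1)] have "reorder_sign A (S - A) = reorder_sign (S - A) A * (-1) ^ (card (S - A) * card A)"
    by auto
  thus "reorder_sign (S - A) (S - (S - A)) * (-1) ^ (card (S - A) * card (S - (S - A))) * x (S - A) * y (S - (S - A)) =
         reorder_sign A (S - A) * y A * x (S - A)"
    using A by (simp add: Diff_Diff_Int Int_absorb1 mult_ac)
qed auto

lemma Rg_eqI: "(\<And>S. finite S \<Longrightarrow> Rg x S = Rg y S) \<Longrightarrow> x = y"
  by (metis Rg_inject Rg_inf ext)

lemma ev_comm:
  assumes "supp ev (Rg x)"
  shows "x * y = y * x"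
proof (rule Rg_eqI)
  fix S :: "nat set" assume fin: "finite S"
  show "Rg (x * y) S = Rg (y * x) S"
    unfolding times_gr.rep_eq gmult_swap[OF fin, of "Rg y" "Rg x"] unfolding gmult_def
    by (rule sum.cong) (use assms in \<open>auto simp: supp_def\<close>)
qed

abbreviation od :: "nat set \<Rightarrow> bool" where "od A \<equiv> odd (card A)"

lemma od_anti:
  assumes "supp od (Rg x)" "supp od (Rg y)"
  shows "y * x = - (x * y)"
proof (rule Rg_eqI)
  fix S :: "nat set" assume fin: "finite S"
  show "Rg (y * x) S = Rg (- (x * y)) S"
    unfolding Rg_minus times_gr.rep_eq gmult_swap[OF fin, of "Rg y" "Rg x"] unfolding gmult_def sum_negf[symmetric]
  proof (rule sum.cong)
    fix A assume "A \<in> Pow S"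
    show "reorder_sign A (S - A) * (-1) ^ (card A * card (S - A)) * Rg x A * Rg y (S - A) =
      - (reorder_sign A (S - A) * Rg x A * Rg y (S - A))"
    proof (cases "Rg x A = 0 \<or> Rg y (S - A) = 0")
      case False
      hence "odd (card A * card (S - A))" using assms by (auto simp: supp_def)
      thus ?thesis by simp
    qed auto
  qed simp
qed

lemma od_sq:
  assumes "supp od (Rg x)"
  shows "x * x = 0"
proof (rule Rg_eqI)
  fix S :: "nat set" assume fin: "finite S"
  have "Rg (x * x) S = - Rg (x * x) S" using od_anti[OF assms assms] by (metis Rg_minus)
  thus "Rg (x * x) S = Rg 0 S" by (simp add: zero_gr.rep_eq gzero_def)
qed

lemma supp_Rg_sum: "(\<And>k. k \<in> K \<Longrightarrow> supp P (Rg (f k))) \<Longrightarrow> supp P (Rg (sum f K))"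
  unfolding Rg_sum supp_def
proof (intro allI impI)
  fix A assume h: "\<And>k. k \<in> K \<Longrightarrow> \<forall>A. Rg (f k) A \<noteq> 0 \<longrightarrow> P A" and ne: "(\<Sum>k\<in>K. Rg (f k) A) \<noteq> 0"
  then obtain k where "k \<in> K" "Rg (f k) A \<noteq> 0" using sum.not_neutral_contains_not_neutral by blast
  thus "P A" using h by blast
qed

lemma supp_Rg_mult: "closedP P \<Longrightarrow> supp P (Rg x) \<Longrightarrow> supp P (Rg y) \<Longrightarrow> supp P (Rg (x * y))"
  by (simp add: times_gr.rep_eq supp_gmult)

definition low :: "nat \<Rightarrow> grass \<Rightarrow> bool" where "low m x \<longleftrightarrow> (\<forall>A. card A < m \<longrightarrow> x A = 0)"

lemma low_mult:
  assumes "low a (Rg x)" "low b (Rg y)"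
  shows "low (a + b) (Rg (x * y))"
  unfolding low_def
proof (intro allI impI)
  fix S :: "nat set" assume c: "card S < a + b"
  show "Rg (x * y) S = 0"
  proof (cases "finite S")
    case True
    have "\<forall>A\<in>Pow S. reorder_sign A (S - A) * Rg x A * Rg y (S - A) = 0"
    proof
      fix A assume "A \<in> Pow S"
      hence A: "A \<subseteq> S" by simp
      have fA: "finite A" "finite (S - A)" using A True finite_subset by blast+
      have "A \<union> (S - A) = S" using A by blast
      hence "card A + card (S - A) = card S"
        using card_Un_disjoint[OF fA] by simp
      hence "card A < a \<or> card (S - A) < b" using c by linarith
      thus "reorder_sign A (S - A) * Rg x A * Rg y (S - A) = 0" using assms by (auto simp: low_def)
    qed
    hence "(\<Sum>A\<in>Pow S. reorder_sign A (S - A) * Rg x A * Rg y (S - A)) = 0" by (rule sum.neutral)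
    thus ?thesis by (simp add: times_gr.rep_eq gmult_def)
  qed (simp add: Rg_inf)
qed

lemma low_pow: "low 1 (Rg x) \<Longrightarrow> low k (Rg (x ^ k))"
proof (induction k)
  case 0 thus ?case by (simp add: low_def)
next
  case (Suc k) thus ?case using low_mult[of 1 x k "x ^ k"] by simp
qed



lemma comm_pow: "(Y::'a::ring_1) * N = N * Y \<Longrightarrow> Y * N ^ k = N ^ k * Y"
proof (induction k)
  case (Suc k)
  assume c: "Y * N = N * Y"
  have "Y * N ^ Suc k = (Y * N) * N ^ k" by (simp add: mult.assoc)
  also have "\<dots> = N * (Y * N ^ k)" using c by (simp add: mult.assoc)
  also have "\<dots> = N * (N ^ k * Y)" using Suc c by simp
  finally show ?case by (simp add: mult.assoc)
qed simp

lemma binom_nil: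
  fixes N Y :: "'a::ring_1"
  assumes c: "N * Y = Y * N" and y: "Y * Y = 0"
  shows "(N + Y) ^ Suc i = N ^ Suc i + of_nat (Suc i) * (N ^ i * Y)"
proof (induction i)
  case 0 thus ?case by simp
next
  case (Suc i)
  have yn: "Y * N ^ k = N ^ k * Y" for k using comm_pow c by metis
  have "(N + Y) ^ Suc (Suc i) = (N + Y) * (N ^ Suc i + of_nat (Suc i) * (N ^ i * Y))"
    using Suc by simp
  also have "\<dots> = N ^ Suc (Suc i) + of_nat (Suc i) * (N ^ Suc i * Y) + Y * N ^ Suc i
       + of_nat (Suc i) * (Y * N ^ i * Y)"
    by (simp add: algebra_simps mult_of_nat_commute)
  also have "Y * N ^ i * Y = 0" by (simp add: yn mult.assoc y)
  also have "Y * N ^ Suc i = N ^ Suc i * Y" by (rule yn)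
  finally show ?case by (simp add: algebra_simps)
qed

lemma gexp_ext:
  fixes X N :: gr
  assumes n: "gnil (Rg X) = Rg N" and c: "card S \<le> M"
  shows "gexp (Rg X) S = exp (Rg X {}) * (\<Sum>k\<le>M. Rg (N ^ k) S / of_nat (fact k))"
proof -
  have l1: "low 1 (Rg N)"
    unfolding low_def n[symmetric] by (auto simp: gnil_def Rg_inf card_eq_0_iff)
  have "gexp (Rg X) S = exp (Rg X {}) * (\<Sum>k\<le>card S. Rg (N ^ k) S / of_nat (fact k))"
    by (simp add: gexp_def n Rg_pow)
  also have "(\<Sum>k\<le>card S. Rg (N ^ k) S / of_nat (fact k)) = (\<Sum>k\<le>M. Rg (N ^ k) S / of_nat (fact k))"
  proof (rule sum.mono_neutral_left)
    show "\<forall>i\<in>{..M} - {..card S}. Rg (N ^ i) S / of_nat (fact i) = 0"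
      using low_pow[OF l1] by (auto simp: low_def)
  qed (use c in auto)
  finally show ?thesis .
qed

lemma gexp_in: "gexp x \<in> {x. \<forall>S. infinite S \<longrightarrow> x S = 0}"
  by (auto simp: gexp_def gone_def)

lemma fps_app_in: "fps_app f x \<in> {x. \<forall>S. infinite S \<longrightarrow> x S = 0}"
  by (auto simp: fps_app_def gone_def)

lemma gnil_in: "gnil (Rg x) \<in> {x. \<forall>S. infinite S \<longrightarrow> x S = 0}"
  by (auto simp: gnil_def Rg_inf)

lemma gexp_split:
  fixes X Y N :: gr
  assumes n: "gnil (Rg X) = Rg N" and ev: "supp ev (Rg N)" and y0: "Rg Y {} = 0" and yy: "Y * Y = 0"
  shows "gexp (Rg (X + Y)) = Rg (Ag (gexp (Rg X)) + Ag (gexp (Rg X)) * Y)"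
proof -
  define E where "E = Ag (gexp (Rg X))"
  have RE: "Rg E = gexp (Rg X)" unfolding E_def using gexp_in Ag_inverse by blast
  have n2: "gnil (Rg (X + Y)) = Rg (N + Y)"
  proof (rule ext)
    fix A show "gnil (Rg (X + Y)) A = Rg (N + Y) A"
      using fun_cong[OF n, of A] y0 by (cases "A = {}") (auto simp: plus_gr.rep_eq gnil_def gadd_def)
  qed
  have c0: "Rg (X + Y) {} = Rg X {}" using y0 by (simp add: plus_gr.rep_eq gadd_def)
  have bn: "(N + Y) ^ Suc i = N ^ Suc i + of_nat (Suc i) * (N ^ i * Y)" for i
    by (rule binom_nil[OF ev_comm[OF ev] yy])
  show ?thesis unfolding E_def[symmetric]
  proof (rule ext)
    fix S :: "nat set"
    show "gexp (Rg (X + Y)) S = Rg (E + E * Y) S"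
    proof (cases "finite S")
      case False thus ?thesis using gexp_in Rg_inf by auto
    next
      case fin: True
      define m where "m = card S"
      define ec where "ec = exp (Rg X {})"
      have fs: "(of_nat (Suc i) * b) / of_nat (fact (Suc i)) = b / (of_nat (fact i) :: complex)" for i b
        by (simp only: fact_Suc of_nat_mult) (simp del: of_nat_Suc)
      have "gexp (Rg (X + Y)) S = ec * (\<Sum>k\<le>Suc m. Rg ((N + Y) ^ k) S / of_nat (fact k))"
        using gexp_ext[OF n2, of S "Suc m"] c0 by (simp add: m_def ec_def)
      also have "\<dots> = ec * (Rg 1 S + (\<Sum>i\<le>m. Rg ((N + Y) ^ Suc i) S / of_nat (fact (Suc i))))"
        by (simp only: sum.atMost_Suc_shift) simp
      also have "\<dots> = ec * (Rg 1 S + (\<Sum>i\<le>m. Rg (N ^ Suc i) S / of_nat (fact (Suc i)) + Rg (N ^ i * Y) S / of_nat (fact i)))"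
        unfolding bn by (simp only: plus_gr.rep_eq gadd_def Rg_of_nat add_divide_distrib fs)
      finally have L: "gexp (Rg (X + Y)) S = ec * (Rg 1 S + (\<Sum>i\<le>m. Rg (N ^ Suc i) S / of_nat (fact (Suc i)) + Rg (N ^ i * Y) S / of_nat (fact i)))" .
      have "Rg E S = ec * (\<Sum>k\<le>Suc m. Rg (N ^ k) S / of_nat (fact k))"
        using gexp_ext[OF n, of S "Suc m"] RE by (simp add: m_def ec_def)
      also have "\<dots> = ec * (Rg 1 S + (\<Sum>i\<le>m. Rg (N ^ Suc i) S / of_nat (fact (Suc i))))"
        by (simp only: sum.atMost_Suc_shift) simp
      finally have E: "Rg E S = ec * (Rg 1 S + (\<Sum>i\<le>m. Rg (N ^ Suc i) S / of_nat (fact (Suc i))))" .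
      have "Rg (E * Y) S = (\<Sum>A\<in>Pow S. reorder_sign A (S - A) * Rg E A * Rg Y (S - A))"
        by (simp add: times_gr.rep_eq gmult_def)
      also have "\<dots> = (\<Sum>A\<in>Pow S. reorder_sign A (S - A) * (ec * (\<Sum>i\<le>m. Rg (N ^ i) A / of_nat (fact i))) * Rg Y (S - A))"
      proof (rule sum.cong)
        fix A assume "A \<in> Pow S"
        hence "card A \<le> m" unfolding m_def using fin by (simp add: card_mono)
        thus "reorder_sign A (S - A) * Rg E A * Rg Y (S - A) = reorder_sign A (S - A) * (ec * (\<Sum>i\<le>m. Rg (N ^ i) A / of_nat (fact i))) * Rg Y (S - A)"
          using gexp_ext[OF n, of A m] RE by (simp add: ec_def)
      qed simp
      also have "\<dots> = ec * (\<Sum>i\<le>m. (\<Sum>A\<in>Pow S. reorder_sign A (S - A) * Rg (N ^ i) A * Rg Y (S - A)) / of_nat (fact i))"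
        by (simp add: sum_distrib_left sum_distrib_right sum_divide_distrib mult_ac) (rule sum.swap)
      also have "\<dots> = ec * (\<Sum>i\<le>m. Rg (N ^ i * Y) S / of_nat (fact i))"
        by (simp add: times_gr.rep_eq gmult_def)
      finally have EY: "Rg (E * Y) S = ec * (\<Sum>i\<le>m. Rg (N ^ i * Y) S / of_nat (fact i))" .
      have "Rg (E + E * Y) S = Rg E S + Rg (E * Y) S" by (simp add: plus_gr.rep_eq gadd_def)
      thus ?thesis unfolding L E EY by (simp only: sum.distrib distrib_left add.assoc)
    qed
  qed
qed



lemma gen_in: "gen k \<in> {x. \<forall>S. infinite S \<longrightarrow> x S = 0}"
  by (auto simp: gen_def)

lemma gmult_gen:
  "gmult (gen a) (gen b) B = (if a \<noteq> b \<and> B = {a, b} then (if b < a then -1 else 1) else 0)"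
proof (cases "finite B")
  case False thus ?thesis by (auto simp: gmult_inf)
next
  case fin: True
  have "gmult (gen a) (gen b) B = (\<Sum>A\<in>Pow B. if A = {a} then (if B - {a} = {b} then reorder_sign {a} {b} else 0) else 0)"
    unfolding gmult_def by (rule sum.cong) (auto simp: gen_def)
  also have "\<dots> = (if a \<in> B \<and> B - {a} = {b} then reorder_sign {a} {b} else 0)"
    using fin by simp
  also have "reorder_sign {a} {b} = (if b < a then -1 else 1)"
  proof -
    have "{(x, y). x \<in> {a} \<and> y \<in> {b} \<and> y < x} = (if b < a then {(a, b)} else {})" by auto
    thus ?thesis by (simp add: reorder_sign_def)
  qed
  also have "(a \<in> B \<and> B - {a} = {b}) = (a \<noteq> b \<and> B = {a, b})" by auto
  finally show ?thesis .
qed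

lemma supp_gen: "supp od (gen k)"
  by (auto simp: supp_def gen_def)

definition pcl :: "nat set \<Rightarrow> bool" where "pcl A \<longleftrightarrow> (\<forall>i. 2 * i \<in> A \<longleftrightarrow> Suc (2 * i) \<in> A)"

lemma closed_pcl: "closedP pcl"
  by (auto simp: closedP_def pcl_def)

lemma pairing_eq: "pairing n B = (\<Sum>i\<in>{1..n}. if B = {2 * i, Suc (2 * i)} then 1 else 0)"
  unfolding pairing_def psibar_def psi_def gmult_gen by (rule sum.cong) auto

lemma pairing_nz: "pairing n B \<noteq> 0 \<Longrightarrow> \<exists>i. B = {2 * i, Suc (2 * i)}"
  unfolding pairing_eq using sum.not_neutral_contains_not_neutral by (smt (verit))

lemma supp_pairing: "supp ev (pairing n)" "supp pcl (pairing n)"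
proof -
  have "card {2 * i, Suc (2 * i)} = 2" for i :: nat by simp
  thus "supp ev (pairing n)" unfolding supp_def using pairing_nz by fastforce
  have "pcl {2 * i, Suc (2 * i)}" for i :: nat unfolding pcl_def by auto
  thus "supp pcl (pairing n)" unfolding supp_def using pairing_nz by fastforce
qed

lemma Jpairing_pcl:
  assumes "pcl B"
  shows "Jpairing n B = pairing n B"
proof -
  have "(\<Sum>j\<in>{1..n}. gmult (psibar i) (psi j) B) = gmult (psibar i) (psi i) B" if i: "i \<in> {1..n}" for i
  proof -
    have "(\<Sum>j\<in>{1..n}. gmult (psibar i) (psi j) B) = (\<Sum>j\<in>{1..n}. if j = i then gmult (psibar i) (psi i) B else 0)"
    proof (rule sum.cong)
      fix j assume "j \<in> {1..n}"
      show "gmult (psibar i) (psi j) B = (if j = i then gmult (psibar i) (psi i) B else 0)"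
      proof (cases "j = i")
        case False
        have "B \<noteq> {2 * i, Suc (2 * j)}"
        proof
          assume "B = {2 * i, Suc (2 * j)}"
          hence "Suc (2 * i) \<in> B" using assms unfolding pcl_def by auto
          thus False using \<open>B = _\<close> False by auto
        qed
        thus ?thesis using False by (simp add: psibar_def psi_def gmult_gen)
      qed simp
    qed simp
    thus ?thesis using i by simp
  qed
  thus ?thesis unfolding Jpairing_def pairing_def by simp
qed



lemma Rg_Ag: "x \<in> {x. \<forall>S. infinite S \<longrightarrow> x S = 0} \<Longrightarrow> Rg (Ag x) = x"
  using Ag_inverse by blast

theorem lemma3:
  fixes n r :: nat and g h :: "complex fps"
  assumes "n \<ge> 1"
  shows "berezin n (gmult (gpow (pairing n) r)
            (gexp (gadd (fps_app h (pairing n)) (gmult (Jpairing n) (fps_app g (pairing n))))))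
       = berezin n (gmult (gpow (pairing n) r)
            (gmult (gexp (fps_app h (pairing n)))
                   (gadd gone (gmult (pairing n) (fps_app g (pairing n))))))"
proof -
  define bb where "bb = (\<lambda>i. Ag (psibar i))"
  define pp where "pp = (\<lambda>i. Ag (psi i))"
  have Rbb: "Rg (bb i) = psibar i" for i unfolding bb_def psibar_def by (rule Rg_Ag[OF gen_in])
  have Rpp: "Rg (pp i) = psi i" for i unfolding pp_def psi_def by (rule Rg_Ag[OF gen_in])
  define P where "P = (\<Sum>i\<in>{1..n}. bb i * pp i)"
  define eb where "eb = (\<Sum>i\<in>{1..n}. bb i)"
  define ep where "ep = (\<Sum>i\<in>{1..n}. pp i)"
  define Q where "Q = eb * ep"
  have RP: "Rg P = pairing n"
    unfolding P_def pairing_def by (rule ext) (simp add: Rg_sum times_gr.rep_eq Rbb Rpp)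
  have RQ: "Rg Q = Jpairing n"
    unfolding Q_def eb_def ep_def Jpairing_def
    by (rule ext) (simp only: sum_product Rg_sum times_gr.rep_eq Rbb Rpp)
  have odb: "supp od (Rg eb)" unfolding eb_def
    by (rule supp_Rg_sum) (simp add: Rbb psibar_def supp_gen)
  have odp: "supp od (Rg ep)" unfolding ep_def
    by (rule supp_Rg_sum) (simp add: Rpp psi_def supp_gen)
  have QQ: "Q * Q = 0"
  proof -
    have "Q * Q = eb * (ep * eb) * ep" unfolding Q_def by (simp add: mult.assoc)
    also have "ep * eb = - (eb * ep)" by (rule od_anti[OF odb odp])
    also have "eb * (- (eb * ep)) * ep = - ((eb * eb) * (ep * ep))" by (simp add: mult.assoc)
    finally show ?thesis using od_sq[OF odb] by simp
  qed
  define H where "H = Ag (fps_app h (pairing n))"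
  define G where "G = Ag (fps_app g (pairing n))"
  have RH: "Rg H = fps_app h (pairing n)" unfolding H_def by (rule Rg_Ag[OF fps_app_in])
  have RG: "Rg G = fps_app g (pairing n)" unfolding G_def by (rule Rg_Ag[OF fps_app_in])
  define N where "N = Ag (gnil (Rg H))"
  have RN: "Rg N = gnil (Rg H)" unfolding N_def by (rule Rg_Ag[OF gnil_in])
  define E where "E = Ag (gexp (Rg H))"
  have RE: "Rg E = gexp (Rg H)" unfolding E_def by (rule Rg_Ag[OF gexp_in])
  have evH: "supp ev (Rg H)" unfolding RH by (rule supp_fps_app[OF closed_ev supp_pairing(1)])
  have evG: "supp ev (Rg G)" unfolding RG by (rule supp_fps_app[OF closed_ev supp_pairing(1)])
  have pcH: "supp pcl (Rg H)" unfolding RH by (rule supp_fps_app[OF closed_pcl supp_pairing(2)])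
  have pcG: "supp pcl (Rg G)" unfolding RG by (rule supp_fps_app[OF closed_pcl supp_pairing(2)])
  have pcP: "supp pcl (Rg P)" unfolding RP by (rule supp_pairing(2))
  have pcE: "supp pcl (Rg E)" unfolding RE by (rule supp_gexp[OF closed_pcl pcH])
  have evN: "supp ev (Rg N)" unfolding RN by (rule supp_gnil[OF evH])
  have GQ: "G * Q = Q * G" by (rule ev_comm[OF evG])
  have Y0: "Rg (Q * G) {} = 0"
  proof -
    have "Jpairing n {} = 0" by (simp add: Jpairing_def psibar_def psi_def gmult_gen)
    thus ?thesis by (simp add: times_gr.rep_eq gmult_def RQ)
  qed
  have YY: "(Q * G) * (Q * G) = 0"
  proof -
    have "(Q * G) * (Q * G) = Q * ((G * Q) * G)" by (simp add: mult.assoc)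
    also have "\<dots> = Q * ((Q * G) * G)" by (simp only: GQ)
    also have "\<dots> = (Q * Q) * (G * G)" by (simp add: mult.assoc)
    finally show ?thesis by (simp add: QQ)
  qed
  have split: "gexp (Rg (H + Q * G)) = Rg (E + E * (Q * G))"
    unfolding E_def by (rule gexp_split[OF RN[symmetric] evN Y0 YY])
  define T where "T = {2..2 * n + 1}"
  define F where "F = P ^ r * E * G"
  have pcF: "supp pcl (Rg F)" unfolding F_def
    by (intro supp_Rg_mult[OF closed_pcl] pcG pcE) (simp add: Rg_pow supp_gpow[OF closed_pcl pcP])
  have pT: "pcl T" unfolding T_def pcl_def by auto
  have key: "Rg (F * Q) T = Rg (F * P) T"
    unfolding times_gr.rep_eq gmult_def
  proof (rule sum.cong)
    fix A assume A: "A \<in> Pow T"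
    show "reorder_sign A (T - A) * Rg F A * Rg Q (T - A) = reorder_sign A (T - A) * Rg F A * Rg P (T - A)"
    proof (cases "Rg F A = 0")
      case False
      hence "pcl A" using pcF by (auto simp: supp_def)
      hence "pcl (T - A)" using pT by (auto simp: pcl_def)
      thus ?thesis by (simp add: RQ RP Jpairing_pcl)
    qed simp
  qed simp
  have LHS: "gmult (gpow (pairing n) r)
            (gexp (gadd (fps_app h (pairing n)) (gmult (Jpairing n) (fps_app g (pairing n)))))
        = Rg (P ^ r * E + F * Q)"
  proof -
    have e1: "gadd (fps_app h (pairing n)) (gmult (Jpairing n) (fps_app g (pairing n))) = Rg (H + Q * G)"
      by (simp add: plus_gr.rep_eq times_gr.rep_eq RH RQ RG)
    have e2: "P ^ r * (E + E * (Q * G)) = P ^ r * E + F * Q"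
      unfolding F_def by (simp add: algebra_simps GQ)
    have "gmult (gpow (pairing n) r)
            (gexp (gadd (fps_app h (pairing n)) (gmult (Jpairing n) (fps_app g (pairing n)))))
        = gmult (gpow (pairing n) r) (Rg (E + E * (Q * G)))" unfolding e1 split ..
    also have "\<dots> = Rg (P ^ r * (E + E * (Q * G)))" by (simp add: times_gr.rep_eq Rg_pow RP)
    finally show ?thesis unfolding e2 .
  qed
  have RHS: "gmult (gpow (pairing n) r)
            (gmult (gexp (fps_app h (pairing n)))
                   (gadd gone (gmult (pairing n) (fps_app g (pairing n)))))
        = Rg (P ^ r * E + F * P)"
  proof -
    have "P ^ r * (E * (1 + P * G)) = P ^ r * E + F * P"
      unfolding F_def using ev_comm[OF evG, of P] by (simp add: algebra_simps)
    moreover have "gmult (gpow (pairing n) r)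
            (gmult (gexp (fps_app h (pairing n)))
                   (gadd gone (gmult (pairing n) (fps_app g (pairing n))))) = Rg (P ^ r * (E * (1 + P * G)))"
      by (simp add: times_gr.rep_eq plus_gr.rep_eq one_gr.rep_eq Rg_pow RP RE RH RG)
    ultimately show ?thesis by simp
  qed
  show ?thesis unfolding LHS RHS berezin_def T_def[symmetric]
    by (simp add: plus_gr.rep_eq gadd_def key)
qed


end
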